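(* Consider the stochastic minimax problem $\min_{x\in\mathbb{R}^n}\max_{y\in\mathbb{R}^m}\phi(x,y)$, $\phi(x,y)=\vartheta(x)+f(x,y)-\omega(y)$, with the setting, oracle, algorithm (SAPS) and averaged iterate described in the context, and assume (A1)–(A4) hold. Let $N>0$ be an integer, let $z^1,\dots,z^N$ be generated by SAPS with a constant step size $\gamma_k\equiv\gamma$ for $k=1,\dots,N$, and let $\widetilde z^N$ be the averaged iterate. Then: (a) if $\gamma_k=1/\sqrt N$, then $\mathbb{E}[\epsilon_\phi(\widetilde z^N)]\le (\|z^1-z^*\|^2+M_*^2)/(2\sqrt N)$; (b) if $\gamma_k=\|z^1-z^*\|/(M_*\sqrt N)$, then $\mathbb{E}[\epsilon_\phi(\widetilde z^N)]\le \|z^1-z^*\|M_*/\sqrt N$; (c) if $\gamma_k=\theta\|z^1-z^*\|/(M_*\sqrt N)$ for some $\theta>0$, then $\mathbb{E}[\epsilon_\phi(\widetilde z^N)]\le \max\{\theta,\theta^{-1}\}\|z^1-z^*\|M_*/\sqrt N$.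
   Context: Setting: $\vartheta:\mathbb{R}^n\to\mathbb{R}\cup\{+\infty\}$ and $\omega:\mathbb{R}^m\to\mathbb{R}\cup\{+\infty\}$ are proper lower semicontinuous convex functions; $\xi$ is a random vector with distribution supported on $\Xi\subseteq\mathbb{R}^q$; $F:\mathbb{R}^n\times\mathbb{R}^m\times\Xi\to\mathbb{R}$, and $f(x,y)=\mathbb{E}[F(x,y,\xi)]$ is finite, continuous, convex in $x$ and concave in $y$ on $\mathbb{Z}:=\mathrm{dom}\,\vartheta\times\mathrm{dom}\,\omega$. Write $z=(x,y)$. For a proper lsc convex $h$ and $\gamma>0$, $\mathrm{Prox}_{\gamma h}(u)=\mathrm{argmin}_w\{h(w)+\frac{1}{2\gamma}\|w-u\|^2\}$. (A1) The samples $\xi_1,\xi_2,\dots$ are i.i.d. copies of $\xi$. (A2) A stochastic oracle returns, for $(x,y,\xi)\in\mathbb{Z}\times\Xi$, vectors $G_x(x,y,\xi)\in\mathbb{R}^n$, $G_y(x,y,\xi)\in\mathbb{R}^m$ such that $g_x(x,y):=\mathbb{E}[G_x(x,y,\xi)]\in\partial_x f(x,y)$ and $g_y(x,y):=\mathbb{E}[G_y(x,y,\xi)]$ satisfies $-g_y(x,y)\in\partial_y[-f](x,y)$. Write $G(z,\xi)=(G_x(z,\xi),-G_y(z,\xi))$ and $g(z)=(g_x(z),-g_y(z))$. (A3) There is $z^*=(x^*,y^* )\in\mathbb{Z}$ with $\phi(x^*,y)\le\phi(x^*,y^* )\le\phi(x,y^* )$ for all $(x,y)\in\mathbb{Z}$.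 The minimax optimality measure is $\epsilon_\phi(z)=\phi(x,y^* )-\phi(x^*,y)$. (A4) There is $M_*>0$ such that for every $z=(x,y)\in\mathbb{Z}$ there exist $v_x(x)\in\partial\vartheta(x)$, $v_y(y)\in\partial\omega(y)$ with $v(z)=(v_x(x),v_y(y))$ satisfying $\mathbb{E}[\|v(z)+G(z,\xi)\|^2]\le M_*^2$. SAPS algorithm: given $z^1=(x^1,y^1)\in\mathbb{R}^n\times\mathbb{R}^m$ and step sizes $\gamma_k>0$, for $k=1,2,\dots$: $x^{k+1}=\mathrm{Prox}_{\gamma_k\vartheta}(x^k-\gamma_kG_x(x^k,y^k,\xi_k))$, $y^{k+1}=\mathrm{Prox}_{\gamma_k\omega}(y^k+\gamma_kG_y(x^k,y^k,\xi_k))$. Averaged iterate: $\widetilde z^N=(\widetilde x^N,\widetilde y^N)=\sum_{j=1}^N\lambda_j^N z^j$ with $\lambda_j^N=\gamma_j/\sum_{i=1}^N\gamma_i$. *)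

theory Defs
  imports "HOL-Probability.Probability"
begin

definition edom :: "('a \<Rightarrow> ereal) \<Rightarrow> 'a set" where
  "edom h = {x. h x \<noteq> \<infinity>}"

definition proper_fun :: "('a \<Rightarrow> ereal) \<Rightarrow> bool" where
  "proper_fun h \<longleftrightarrow> (\<forall>x. h x \<noteq> -\<infinity>) \<and> (\<exists>x. h x \<noteq> \<infinity>)"

definition lsc_fun :: "('a::topological_space \<Rightarrow> ereal) \<Rightarrow> bool" where
  "lsc_fun h \<longleftrightarrow> (\<forall>c::real. closed {x. h x \<le> ereal c})"

definition convex_efun :: "('a::real_vector \<Rightarrow> ereal) \<Rightarrow> bool" where
  "convex_efun h \<longleftrightarrow> convex (edom h) \<and> convex_on (edom h) (\<lambda>x. real_of_ereal (h x))"

definition proper_lsc_convex :: "('a::real_normed_vector \<Rightarrow> ereal) \<Rightarrow> bool" where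
  "proper_lsc_convex h \<longleftrightarrow> proper_fun h \<and> lsc_fun h \<and> convex_efun h"

definition esubdiff :: "('a::real_inner \<Rightarrow> ereal) \<Rightarrow> 'a \<Rightarrow> 'a set" where
  "esubdiff h x = {v. h x \<noteq> \<infinity> \<and> (\<forall>w. h x + ereal (v \<bullet> (w - x)) \<le> h w)}"

definition Prox :: "real \<Rightarrow> ('a::real_normed_vector \<Rightarrow> ereal) \<Rightarrow> 'a \<Rightarrow> 'a" where
  "Prox \<gamma> h u = (THE w. \<forall>v. h w + ereal (norm (w - u)^2 / (2 * \<gamma>))
                              \<le> h v + ereal (norm (v - u)^2 / (2 * \<gamma>)))"

text \<open>The objective phi(x,y) = vartheta(x) + f(x,y) - omega(y) (meaningful on dom x dom).\<close>
definition phi :: "('a \<Rightarrow> ereal) \<Rightarrow> ('a \<Rightarrow> 'b \<Rightarrow> real) \<Rightarrow> ('b \<Rightarrow> ereal) \<Rightarrow> 'a \<Rightarrow> 'b \<Rightarrow> real" where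
  "phi vth f \<omega> x y = real_of_ereal (vth x) + f x y - real_of_ereal (\<omega> y)"

definition eps_phi :: "('a \<Rightarrow> ereal) \<Rightarrow> ('a \<Rightarrow> 'b \<Rightarrow> real) \<Rightarrow> ('b \<Rightarrow> ereal) \<Rightarrow> 'a \<times> 'b \<Rightarrow> 'a \<times> 'b \<Rightarrow> real" where
  "eps_phi vth f \<omega> zs z = phi vth f \<omega> (fst z) (snd zs) - phi vth f \<omega> (fst zs) (snd z)"

definition avg_iter :: "(nat \<Rightarrow> real) \<Rightarrow> nat \<Rightarrow> (nat \<Rightarrow> 'a::real_vector) \<Rightarrow> 'a" where
  "avg_iter \<gamma>s N z = (\<Sum>j=1..N. (\<gamma>s j / (\<Sum>i=1..N. \<gamma>s i)) *\<^sub>R z j)"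

end

theory Submission
  imports Defs "HOL-Probability.Probability"
begin

lemma le_of_le_plus_t:
  fixes a b c :: real
  assumes "\<And>t. 0 < t \<Longrightarrow> t \<le> 1 \<Longrightarrow> a \<le> b + t * c" and "c \<ge> 0"
  shows "a \<le> b"
proof (rule field_le_epsilon)
  fix e :: real assume e: "0 < e"
  define t where "t = min 1 (e / (c + 1))"
  have t0: "0 < t" "t \<le> 1" using e \<open>c \<ge> 0\<close> by (auto simp: t_def)
  have "t * c \<le> (e / (c + 1)) * c" using t0 \<open>c\<ge>0\<close> by (intro mult_right_mono) (auto simp: t_def)
  also have "\<dots> \<le> e" using e \<open>c \<ge> 0\<close> by (simp add: field_simps)
  finally show "a \<le> b + e" using assms(1)[OF t0] by linarith
qed

lemma norm_add_sq: "(norm (a + b))^2 = (norm a)^2 + 2 * inner a b + (norm b)^2" for a b :: "'e::real_inner"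
  by (simp add: power2_norm_eq_inner inner_add_left inner_add_right inner_commute)

lemma proper_not_minf: "proper_lsc_convex h \<Longrightarrow> h x \<noteq> -\<infinity>"
  by (simp add: proper_lsc_convex_def proper_fun_def)

lemma prox_min_VI:
  fixes h :: "'a::euclidean_space \<Rightarrow> ereal"
  assumes plc: "proper_lsc_convex h" and g: "\<gamma> > 0"
    and min: "\<forall>v. h p + ereal (norm (p - u)^2 / (2 * \<gamma>)) \<le> h v + ereal (norm (v - u)^2 / (2 * \<gamma>))"
  shows "p \<in> edom h" "\<And>w. w \<in> edom h \<Longrightarrow> \<gamma> * real_of_ereal (h p) + inner (u - p) (w - p) \<le> \<gamma> * real_of_ereal (h w)"
proof -
  obtain w0 where w0: "h w0 \<noteq> \<infinity>" using plc by (auto simp: proper_lsc_convex_def proper_fun_def)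
  have "h p \<noteq> \<infinity>"
  proof
    assume "h p = \<infinity>"
    with min[rule_format, of w0] w0 proper_not_minf[OF plc, of w0] show False by auto
  qed
  then show pd: "p \<in> edom h" by (simp add: edom_def)
  fix w assume wd: "w \<in> edom h"
  have cvx: "convex (edom h)" and cvo: "convex_on (edom h) (\<lambda>x. real_of_ereal (h x))"
    using plc by (auto simp: proper_lsc_convex_def convex_efun_def)
  have fin: "h x = ereal (real_of_ereal (h x))" if "x \<in> edom h" for x
    using that proper_not_minf[OF plc, of x] by (cases "h x") (auto simp: edom_def)
  define hp where "hp = real_of_ereal (h p)"
  define hw where "hw = real_of_ereal (h w)"
  define C where "C = norm (w - p)^2 / (2 * \<gamma>)"
  have "hp - hw \<le> inner (p - u) (w - p) / \<gamma>"
  proof (rule le_of_le_plus_t)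
    show "C \<ge> 0" using g by (simp add: C_def)
    fix t :: real assume t: "0 < t" "t \<le> 1"
    define pt where "pt = (1 - t) *\<^sub>R p + t *\<^sub>R w"
    have ptd: "pt \<in> edom h" using cvx pd wd t by (simp add: pt_def convex_def)
    have c1: "real_of_ereal (h pt) \<le> (1 - t) * hp + t * hw"
      using convex_onD[OF cvo, of t p w] t pd wd by (simp add: pt_def hp_def hw_def)
    have m1: "hp + norm (p - u)^2 / (2 * \<gamma>) \<le> real_of_ereal (h pt) + norm (pt - u)^2 / (2 * \<gamma>)"
      using min[rule_format, of pt] fin[OF pd] fin[OF ptd] unfolding hp_def
      by (metis plus_ereal.simps(1) ereal_less_eq(3))
    have ptu: "pt - u = (p - u) + t *\<^sub>R (w - p)" by (simp add: pt_def algebra_simps)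
    have nq: "norm (pt - u)^2 = norm (p - u)^2 + 2 * t * inner (p - u) (w - p) + t^2 * norm (w - p)^2"
      unfolding ptu norm_add_sq by (simp add: power_mult_distrib)
    have "hp \<le> (1 - t) * hp + t * hw + (2 * t * inner (p - u) (w - p) + t^2 * norm (w - p)^2) / (2 * \<gamma>)"
      using m1 c1 nq by (simp add: add_divide_distrib)
    then have "t * (hp - hw) \<le> t * (inner (p - u) (w - p) / \<gamma> + t * C)"
      using g by (simp add: C_def field_simps power2_eq_square)
    then show "hp - hw \<le> inner (p - u) (w - p) / \<gamma> + t * C"
      using t by simp
  qed
  then have "\<gamma> * (hp - hw) \<le> inner (p - u) (w - p)" using g by (simp add: field_simps)
  moreover have "inner (u - p) (w - p) = - inner (p - u) (w - p)" by (simp add: inner_diff_left)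
  ultimately show "\<gamma> * real_of_ereal (h p) + inner (u - p) (w - p) \<le> \<gamma> * real_of_ereal (h w)"
    by (simp add: hp_def hw_def algebra_simps)
qed

lemma closed_lsc_plus:
  fixes h :: "'a::real_normed_vector \<Rightarrow> ereal"
  assumes lsc: "lsc_fun h" and gc: "continuous_on UNIV g"
  shows "closed {w. h w + ereal (g w) \<le> ereal c}"
  unfolding closed_def
proof (subst open_subopen, intro ballI)
  fix w assume "w \<in> - {w. h w + ereal (g w) \<le> ereal c}"
  then have "ereal c < h w + ereal (g w)" by auto
  then have "ereal (c - g w) < h w"
    by (cases "h w") (auto simp: algebra_simps)
  then obtain d where d1: "ereal (c - g w) < ereal d" and d2: "ereal d < h w"
    using ereal_dense2 by blast
  define T where "T = - {x. h x \<le> ereal d} \<inter> {x. c - g x < d}"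
  have "open (- {x. h x \<le> ereal d})" using lsc by (simp add: lsc_fun_def open_Compl)
  moreover have "open {x. c - g x < d}"
    by (rule open_Collect_less) (auto intro!: continuous_intros gc)
  ultimately have "open T" by (simp add: T_def open_Int)
  moreover have "w \<in> T" using d1 d2 by (auto simp: T_def)
  moreover have "T \<subseteq> - {w. h w + ereal (g w) \<le> ereal c}"
  proof
    fix x assume "x \<in> T"
    then have "ereal d < h x" "c - g x < d" by (auto simp: T_def)
    then have "ereal c < h x + ereal (g x)"
      by (cases "h x") auto
    then show "x \<in> - {w. h w + ereal (g w) \<le> ereal c}" by auto
  qed
  ultimately show "\<exists>T. open T \<and> w \<in> T \<and> T \<subseteq> - {w. h w + ereal (g w) \<le> ereal c}" by blast
qed

lemma prox_exists:
  fixes h :: "'a::euclidean_space \<Rightarrow> ereal"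
  assumes plc: "proper_lsc_convex h" and g: "\<gamma> > 0" and sd: "v0 \<in> esubdiff h z0"
  shows "\<exists>p. \<forall>v. h p + ereal (norm (p - u)^2 / (2 * \<gamma>)) \<le> h v + ereal (norm (v - u)^2 / (2 * \<gamma>))"
proof -
  define q where "q w = norm (w - u)^2 / (2 * \<gamma>)" for w
  define \<Phi> where "\<Phi> w = h w + ereal (q w)" for w
  have qc: "continuous_on UNIV q" unfolding q_def using g by (auto intro!: continuous_intros)
  have hz0: "h z0 \<noteq> \<infinity>" using sd by (simp add: esubdiff_def)
  define a0 where "a0 = real_of_ereal (h z0)"
  have a0e: "h z0 = ereal a0" using hz0 proper_not_minf[OF plc, of z0] by (cases "h z0") (auto simp: a0_def)
  have lb: "ereal (a0 + inner v0 (w - z0)) \<le> h w" for w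
    using sd a0e by (auto simp: esubdiff_def)
  define b where "b = norm v0"
  define L where "L = a0 + inner v0 (u - z0) - \<gamma> * b^2 / 2"
  have psi: "L \<le> a0 + inner v0 (w - z0) + q w" for w
  proof -
    define r where "r = norm (w - u)"
    have i1: "inner v0 (w - z0) = inner v0 (w - u) + inner v0 (u - z0)" by (simp add: inner_diff_right)
    have i2: "- (b * r) \<le> inner v0 (w - u)" unfolding b_def r_def
      using Cauchy_Schwarz_ineq2[of v0 "w - u"] by (simp add: abs_le_iff)
    have "0 \<le> (r - \<gamma> * b)^2" by simp
    then have "- (\<gamma> * b^2 / 2) \<le> - (b * r) + r^2 / (2 * \<gamma>)"
      using g by (simp add: field_simps power2_eq_square)
    then show ?thesis using i1 i2 by (simp add: L_def q_def r_def)
  qed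
  have \<Phi>lb: "ereal L \<le> \<Phi> w" for w
  proof -
    have "ereal L \<le> ereal (a0 + inner v0 (w - z0)) + ereal (q w)" using psi[of w] by simp
    also have "\<dots> \<le> \<Phi> w" unfolding \<Phi>_def by (rule add_right_mono[OF lb])
    finally show ?thesis .
  qed
  define m where "m = Inf (range \<Phi>)"
  have mL: "ereal L \<le> m" unfolding m_def using \<Phi>lb by (auto intro: Inf_greatest)
  have mu: "m \<le> \<Phi> v" for v unfolding m_def by (rule Inf_lower) simp
  have "m \<le> ereal (a0 + q z0)" using mu[of z0] by (simp add: \<Phi>_def a0e)
  then obtain mr where mr: "m = ereal mr" using mL by (cases m) auto
  define S where "S n = {w. h w + ereal (q w) \<le> ereal (mr + 1 / real (Suc n))}" for n
  have Sne: "S n \<noteq> {}" for n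
  proof -
    have "m < ereal (mr + 1 / real (Suc n))" using mr by simp
    then obtain w where "\<Phi> w < ereal (mr + 1 / real (Suc n))"
      unfolding m_def by (auto simp: Inf_less_iff)
    then show ?thesis unfolding S_def \<Phi>_def by (auto intro: less_imp_le)
  qed
  have Scl: "closed (S n)" for n unfolding S_def by (rule closed_lsc_plus[OF _ qc]) (use plc in \<open>simp add: proper_lsc_convex_def\<close>)
  define C where "C = mr + 1 - a0 - inner v0 (u - z0)"
  define R where "R = 2 * \<gamma> * b + \<bar>2 * \<gamma> * C\<bar> + 1"
  have Sb: "S n \<subseteq> cball u R" for n
  proof
    fix w assume "w \<in> S n"
    then have "h w + ereal (q w) \<le> ereal (mr + 1 / real (Suc n))" by (simp add: S_def)
    moreover have "ereal (mr + 1 / real (Suc n)) \<le> ereal (mr + 1)" by (simp add: field_simps)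
    moreover have "ereal (a0 + inner v0 (w - z0)) + ereal (q w) \<le> h w + ereal (q w)"
      by (rule add_right_mono[OF lb])
    ultimately have "a0 + inner v0 (w - z0) + q w \<le> mr + 1"
      by (metis order_trans plus_ereal.simps(1) ereal_less_eq(3))
    define r where "r = norm (w - u)"
    have i1: "inner v0 (w - z0) = inner v0 (w - u) + inner v0 (u - z0)" by (simp add: inner_diff_right)
    have i2: "- (b * r) \<le> inner v0 (w - u)" unfolding b_def r_def
      using Cauchy_Schwarz_ineq2[of v0 "w - u"] by (simp add: abs_le_iff)
    have "r^2 / (2 * \<gamma>) \<le> C + b * r"
      using \<open>a0 + inner v0 (w - z0) + q w \<le> mr + 1\<close> i1 i2 by (simp add: C_def q_def r_def)
    then have rr: "r^2 \<le> 2 * \<gamma> * C + 2 * \<gamma> * b * r" using g by (simp add: field_simps)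
    have "r \<le> R"
    proof (rule ccontr)
      assume "\<not> r \<le> R"
      then have r1: "r > R" by simp
      have b0: "b \<ge> 0" by (simp add: b_def)
      have R1: "R \<ge> 1" using g b0 by (simp add: R_def)
      have "r * r > r * R" using r1 R1 by (intro mult_strict_left_mono) auto
      moreover have "r * R = 2 * \<gamma> * b * r + r * (\<bar>2 * \<gamma> * C\<bar> + 1)" by (simp add: R_def algebra_simps)
      moreover have "r * (\<bar>2 * \<gamma> * C\<bar> + 1) \<ge> 1 * (\<bar>2 * \<gamma> * C\<bar> + 1)"
        using r1 R1 by (intro mult_right_mono) auto
      ultimately have "r^2 > 2 * \<gamma> * b * r + 2 * \<gamma> * C" by (simp add: power2_eq_square)
      then show False using rr by linarith
    qed
    then show "w \<in> cball u R" by (simp add: r_def dist_norm norm_minus_commute)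
  qed
  have Sc: "compact (S n)" for n using Scl Sb by (meson bounded_cball bounded_subset compact_eq_bounded_closed)
  have Sm: "S n \<subseteq> S m'" if "m' \<le> n" for m' n
  proof -
    have "1 / real (Suc n) \<le> 1 / real (Suc m')" using that by (simp add: frac_le)
    then show ?thesis unfolding S_def by (auto elim!: order_trans)
  qed
  obtain p where p: "\<And>n. p \<in> S n" using compact_nest[of S, OF Sc Sne Sm] by blast
  have "\<Phi> p \<le> ereal (mr + 1)" using p[of 0] by (simp add: S_def \<Phi>_def)
  moreover have "\<Phi> p \<noteq> -\<infinity>" using \<Phi>lb[of p] by auto
  ultimately obtain ph where ph: "\<Phi> p = ereal ph" by (cases "\<Phi> p") auto
  have "ph \<le> mr"
  proof (rule field_le_epsilon)
    fix e :: real assume "0 < e"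
    then obtain n where n: "inverse (real (Suc n)) < e" using reals_Archimedean by blast
    have "ph \<le> mr + 1 / real (Suc n)" using p[of n] ph by (simp add: S_def \<Phi>_def)
    then show "ph \<le> mr + e" using n by (simp add: inverse_eq_divide)
  qed
  then have "\<Phi> p \<le> m" using ph mr by simp
  then have "\<forall>v. \<Phi> p \<le> \<Phi> v" using mu order_trans by blast
  then show ?thesis unfolding \<Phi>_def q_def by blast
qed

lemma prox_props:
  fixes h :: "'a::euclidean_space \<Rightarrow> ereal"
  assumes plc: "proper_lsc_convex h" and g: "\<gamma> > 0" and sd: "v0 \<in> esubdiff h z0"
  shows "Prox \<gamma> h u \<in> edom h"
    and "\<And>w. w \<in> edom h \<Longrightarrow> \<gamma> * real_of_ereal (h (Prox \<gamma> h u)) + inner (u - Prox \<gamma> h u) (w - Prox \<gamma> h u) \<le> \<gamma> * real_of_ereal (h w)"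
proof -
  let ?P = "\<lambda>w. \<forall>v. h w + ereal (norm (w - u)^2 / (2 * \<gamma>)) \<le> h v + ereal (norm (v - u)^2 / (2 * \<gamma>))"
  obtain p where p: "?P p" using prox_exists[OF plc g sd] by blast
  have uniq: "p' = p" if "?P p'" for p'
  proof -
    have a: "\<gamma> * real_of_ereal (h p) + inner (u - p) (p' - p) \<le> \<gamma> * real_of_ereal (h p')"
      using prox_min_VI[OF plc g p] prox_min_VI(1)[OF plc g that] by blast
    have b: "\<gamma> * real_of_ereal (h p') + inner (u - p') (p - p') \<le> \<gamma> * real_of_ereal (h p)"
      using prox_min_VI[OF plc g that] prox_min_VI(1)[OF plc g p] by blast
    have "inner (p' - p) (p' - p) = inner (u - p) (p' - p) + inner (u - p') (p - p')"
      by (simp add: inner_diff_left inner_diff_right inner_commute algebra_simps)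
    then have "inner (p' - p) (p' - p) \<le> 0" using a b by linarith
    then have "inner (p' - p) (p' - p) = 0" using inner_ge_zero[of "p' - p"] by linarith
    then show ?thesis by simp
  qed
  have eq: "Prox \<gamma> h u = p" unfolding Prox_def using p uniq by (rule the_equality)
  show "Prox \<gamma> h u \<in> edom h" unfolding eq by (rule prox_min_VI(1)[OF plc g p])
  show "\<And>w. w \<in> edom h \<Longrightarrow> \<gamma> * real_of_ereal (h (Prox \<gamma> h u)) + inner (u - Prox \<gamma> h u) (w - Prox \<gamma> h u) \<le> \<gamma> * real_of_ereal (h w)"
    unfolding eq by (rule prox_min_VI(2)[OF plc g p])
qed

lemma prox_nonexp:
  fixes h :: "'a::euclidean_space \<Rightarrow> ereal"
  assumes plc: "proper_lsc_convex h" and g: "\<gamma> > 0" and sd: "v0 \<in> esubdiff h z0"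
  shows "dist (Prox \<gamma> h u1) (Prox \<gamma> h u2) \<le> dist u1 u2"
proof -
  define p1 where "p1 = Prox \<gamma> h u1"
  define p2 where "p2 = Prox \<gamma> h u2"
  have a: "\<gamma> * real_of_ereal (h p1) + inner (u1 - p1) (p2 - p1) \<le> \<gamma> * real_of_ereal (h p2)"
    unfolding p1_def p2_def by (rule prox_props(2)[OF plc g sd prox_props(1)[OF plc g sd]])
  have b: "\<gamma> * real_of_ereal (h p2) + inner (u2 - p2) (p1 - p2) \<le> \<gamma> * real_of_ereal (h p1)"
    unfolding p1_def p2_def by (rule prox_props(2)[OF plc g sd prox_props(1)[OF plc g sd]])
  have "inner (p1 - p2) (p1 - p2) = inner (u1 - u2) (p1 - p2) + inner (u1 - p1) (p2 - p1) + inner (u2 - p2) (p1 - p2)"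
    by (simp add: inner_diff_left inner_diff_right inner_commute algebra_simps)
  then have "(norm (p1 - p2))^2 \<le> inner (u1 - u2) (p1 - p2)" using a b by (simp add: power2_norm_eq_inner)
  also have "\<dots> \<le> norm (u1 - u2) * norm (p1 - p2)" by (rule Cauchy_Schwarz_ineq2[THEN abs_le_D1])
  finally have "norm (p1 - p2) * norm (p1 - p2) \<le> norm (u1 - u2) * norm (p1 - p2)" by (simp add: power2_eq_square)
  then have "norm (p1 - p2) \<le> norm (u1 - u2)"
    by (cases "norm (p1 - p2) = 0") (auto simp: mult_le_cancel_right)
  then show ?thesis by (simp add: p1_def p2_def dist_norm)
qed

lemma prox_measurable:
  fixes h :: "'a::euclidean_space \<Rightarrow> ereal"
  assumes plc: "proper_lsc_convex h" and g: "\<gamma> > 0" and sd: "v0 \<in> esubdiff h z0"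
  shows "Prox \<gamma> h \<in> borel_measurable borel"
proof (rule borel_measurable_continuous_onI)
  have "1-lipschitz_on UNIV (Prox \<gamma> h)"
    by (rule lipschitz_onI) (use prox_nonexp[OF plc g sd] in auto)
  then show "continuous_on UNIV (Prox \<gamma> h)" by (rule lipschitz_on_continuous_on)
qed

lemma indep_nn_integral:
  assumes Mp: "prob_space M"
    and ind: "prob_space.indep_var M S X T Y"
    and psi: "\<psi> \<in> borel_measurable (S \<Otimes>\<^sub>M T)"
  shows "(\<integral>\<^sup>+ w. \<psi> (X w, Y w) \<partial>M) = (\<integral>\<^sup>+ w. (\<integral>\<^sup>+ t. \<psi> (X w, t) \<partial>distr M T Y) \<partial>M)"
proof -
  interpret M: prob_space M by (rule Mp)
  have rv: "X \<in> measurable M S" "Y \<in> measurable M T"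
    and eq: "distr M S X \<Otimes>\<^sub>M distr M T Y = distr M (S \<Otimes>\<^sub>M T) (\<lambda>x. (X x, Y x))"
    using ind unfolding M.indep_var_distribution_eq by auto
  interpret D: prob_space "distr M S X" using rv(1) by (rule M.prob_space_distr)
  interpret D2: prob_space "distr M T Y" using rv(2) by (rule M.prob_space_distr)
  interpret DP: pair_sigma_finite "distr M S X" "distr M T Y"
    by (simp add: pair_sigma_finite_def D.sigma_finite_measure_axioms D2.sigma_finite_measure_axioms)
  have pm: "(\<lambda>x. (X x, Y x)) \<in> measurable M (S \<Otimes>\<^sub>M T)" using rv by (rule measurable_Pair)
  have se: "sets (distr M S X \<Otimes>\<^sub>M distr M T Y) = sets (S \<Otimes>\<^sub>M T)"
    by (intro sets_pair_measure_cong) simp_all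
  have psi': "\<psi> \<in> borel_measurable (distr M S X \<Otimes>\<^sub>M distr M T Y)"
    using psi measurable_cong_sets[OF se refl] by simp
  have "(\<integral>\<^sup>+ w. \<psi> (X w, Y w) \<partial>M) = integral\<^sup>N (distr M (S \<Otimes>\<^sub>M T) (\<lambda>x. (X x, Y x))) \<psi>"
    using nn_integral_distr[OF pm, of \<psi>] psi by (simp only: measurable_distr_eq1)
  also have "\<dots> = integral\<^sup>N (distr M S X \<Otimes>\<^sub>M distr M T Y) \<psi>" using eq by simp
  also have "\<dots> = (\<integral>\<^sup>+ z. (\<integral>\<^sup>+ s. \<psi> (z, s) \<partial>distr M T Y) \<partial>distr M S X)"
    using psi' by (rule D2.nn_integral_fst[symmetric])
  also have "\<dots> = (\<integral>\<^sup>+ w. (\<integral>\<^sup>+ s. \<psi> (X w, s) \<partial>distr M T Y) \<partial>M)"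
  proof (rule nn_integral_distr[OF rv(1)])
    show "(\<lambda>z. \<integral>\<^sup>+ s. \<psi> (z, s) \<partial>distr M T Y) \<in> borel_measurable (distr M S X)"
      using D2.borel_measurable_nn_integral[of "\<lambda>z s. \<psi> (z, s)" "distr M S X"] psi' by simp
  qed
  finally show ?thesis .
qed

primrec iter_seq :: "('z \<Rightarrow> 'c \<Rightarrow> 'z) \<Rightarrow> 'z \<Rightarrow> nat \<Rightarrow> (nat \<Rightarrow> 'c) \<Rightarrow> 'z" where
  "iter_seq T z0 0 \<omega> = z0"
| "iter_seq T z0 (Suc k) \<omega> = T (iter_seq T z0 k \<omega>) (\<omega> (Suc k))"

lemma iter_seq_dep: "(\<And>i. i \<le> k \<Longrightarrow> \<omega> i = \<omega>' i) \<Longrightarrow> iter_seq T z0 k \<omega> = iter_seq T z0 k \<omega>'"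
  by (induction k) auto

lemma iter_seq_meas:
  assumes T: "(\<lambda>(z, s). T z s) \<in> measurable (borel \<Otimes>\<^sub>M P) borel"
  shows "iter_seq T z0 k \<in> measurable (PiM {..k} (\<lambda>_. P)) (borel :: 'z::topological_space measure)"
proof (induction k)
  case 0
  then show ?case by simp
next
  case (Suc k)
  have r: "(\<lambda>f. restrict f {..k}) \<in> measurable (PiM {..Suc k} (\<lambda>_. P)) (PiM {..k} (\<lambda>_. P))"
    by (rule measurable_restrict_subset) auto
  have a: "(\<lambda>\<omega>. iter_seq T z0 k (restrict \<omega> {..k})) \<in> measurable (PiM {..Suc k} (\<lambda>_. P)) borel"
    using measurable_compose[OF r Suc.IH] unfolding comp_def .
  have b: "(\<lambda>\<omega>. \<omega> (Suc k)) \<in> measurable (PiM {..Suc k} (\<lambda>_. P)) P"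
    by (rule measurable_component_singleton) auto
  have c: "(\<lambda>\<omega>. (iter_seq T z0 k (restrict \<omega> {..k}), \<omega> (Suc k))) \<in> measurable (PiM {..Suc k} (\<lambda>_. P)) (borel \<Otimes>\<^sub>M P)"
    using a b by (rule measurable_Pair)
  have d: "(\<lambda>\<omega>. T (iter_seq T z0 k (restrict \<omega> {..k})) (\<omega> (Suc k))) \<in> measurable (PiM {..Suc k} (\<lambda>_. P)) borel"
    using measurable_compose[OF c T] by simp
  have e: "iter_seq T z0 k (restrict \<omega> {..k}) = iter_seq T z0 k \<omega>" for \<omega>
    by (rule iter_seq_dep) auto
  show ?case using d by (simp add: e)
qed

lemma iter_seq_nn_integral:
  assumes Mp: "prob_space M" and ind: "prob_space.indep_vars M (\<lambda>_. P) \<xi> UNIV"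
    and T: "(\<lambda>(z, s). T z s) \<in> measurable (borel \<Otimes>\<^sub>M P) (borel :: 'z::topological_space measure)"
    and dX: "distr M P (\<xi> (Suc k)) = P"
    and phi: "\<phi> \<in> borel_measurable ((borel :: 'z measure) \<Otimes>\<^sub>M P)"
  shows "(\<integral>\<^sup>+ w. \<phi> (iter_seq T z0 k (\<lambda>i. \<xi> i w), \<xi> (Suc k) w) \<partial>M)
       = (\<integral>\<^sup>+ w. (\<integral>\<^sup>+ s. \<phi> (iter_seq T z0 k (\<lambda>i. \<xi> i w), s) \<partial>P) \<partial>M)"
proof -
  interpret M: prob_space M by (rule Mp)
  have i1: "M.indep_var (PiM {..k} (\<lambda>_. P)) (\<lambda>w. restrict (\<lambda>i. \<xi> i w) {..k}) (PiM {Suc k} (\<lambda>_. P)) (\<lambda>w. restrict (\<lambda>i. \<xi> i w) {Suc k})"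
    by (rule M.indep_var_restrict[OF ind]) auto
  define \<psi> where "\<psi> = (\<lambda>(f1, f2). \<phi> (iter_seq T z0 k f1, f2 (Suc k)))"
  have m2: "(\<lambda>f. f (Suc k)) \<in> measurable (PiM {Suc k} (\<lambda>_. P)) P"
    by (rule measurable_component_singleton) auto
  have im: "iter_seq T z0 k \<in> measurable (PiM {..k} (\<lambda>_. P)) borel" by (rule iter_seq_meas[OF T])
  have psim: "\<psi> \<in> borel_measurable (PiM {..k} (\<lambda>_. P) \<Otimes>\<^sub>M PiM {Suc k} (\<lambda>_. P))"
  proof -
    let ?S = "PiM {..k} (\<lambda>_. P) \<Otimes>\<^sub>M PiM {Suc k} (\<lambda>_. P)"
    have a: "(\<lambda>p. iter_seq T z0 k (fst p)) \<in> measurable ?S borel"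
      by (rule measurable_compose[OF measurable_fst im])
    have b: "(\<lambda>p. snd p (Suc k)) \<in> measurable ?S P"
      by (rule measurable_compose[OF measurable_snd m2])
    have c: "(\<lambda>p. (iter_seq T z0 k (fst p), snd p (Suc k))) \<in> measurable ?S (borel \<Otimes>\<^sub>M P)"
      using a b by (rule measurable_Pair)
    have "(\<lambda>p. \<phi> (iter_seq T z0 k (fst p), snd p (Suc k))) \<in> borel_measurable ?S"
      using measurable_compose[OF c phi] by (simp add: comp_def)
    then show ?thesis unfolding \<psi>_def by (simp add: case_prod_beta')
  qed
  have e: "iter_seq T z0 k (restrict (\<lambda>i. \<xi> i w) {..k}) = iter_seq T z0 k (\<lambda>i. \<xi> i w)" for w
    by (rule iter_seq_dep) auto
  have Ym: "(\<lambda>w. restrict (\<lambda>i. \<xi> i w) {Suc k}) \<in> measurable M (PiM {Suc k} (\<lambda>_. P))"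
    using i1 by (auto dest: M.indep_var_rv2)
  have "(\<integral>\<^sup>+ w. \<phi> (iter_seq T z0 k (\<lambda>i. \<xi> i w), \<xi> (Suc k) w) \<partial>M)
      = (\<integral>\<^sup>+ w. \<psi> (restrict (\<lambda>i. \<xi> i w) {..k}, restrict (\<lambda>i. \<xi> i w) {Suc k}) \<partial>M)"
    by (simp add: \<psi>_def e)
  also have "\<dots> = (\<integral>\<^sup>+ w. (\<integral>\<^sup>+ t. \<psi> (restrict (\<lambda>i. \<xi> i w) {..k}, t) \<partial>distr M (PiM {Suc k} (\<lambda>_. P)) (\<lambda>w. restrict (\<lambda>i. \<xi> i w) {Suc k})) \<partial>M)"
    by (rule indep_nn_integral[OF Mp i1 psim])
  also have "\<dots> = (\<integral>\<^sup>+ w. (\<integral>\<^sup>+ s. \<phi> (iter_seq T z0 k (\<lambda>i. \<xi> i w), s) \<partial>P) \<partial>M)"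
  proof (rule nn_integral_cong)
    fix w assume w: "w \<in> space M"
    have xin: "restrict (\<lambda>i. \<xi> i w) {..k} \<in> space (PiM {..k} (\<lambda>_. P))"
      using w ind by (auto simp: M.indep_vars_def measurable_def space_PiM)
    have pm1: "(\<lambda>t. \<psi> (restrict (\<lambda>i. \<xi> i w) {..k}, t)) \<in> borel_measurable (PiM {Suc k} (\<lambda>_. P))"
      using measurable_compose[OF measurable_Pair1'[OF xin] psim] by (simp add: comp_def)
    have pm2: "(\<lambda>s. \<phi> (iter_seq T z0 k (\<lambda>i. \<xi> i w), s)) \<in> borel_measurable P"
      using measurable_compose[OF measurable_Pair1'[of "iter_seq T z0 k (\<lambda>i. \<xi> i w)" borel] phi] by (simp add: comp_def)
    have Xm: "\<xi> (Suc k) \<in> measurable M P" using ind by (simp add: M.indep_vars_def)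
    have "(\<integral>\<^sup>+ t. \<psi> (restrict (\<lambda>i. \<xi> i w) {..k}, t) \<partial>distr M (PiM {Suc k} (\<lambda>_. P)) (\<lambda>w. restrict (\<lambda>i. \<xi> i w) {Suc k}))
        = (\<integral>\<^sup>+ w'. \<psi> (restrict (\<lambda>i. \<xi> i w) {..k}, restrict (\<lambda>i. \<xi> i w') {Suc k}) \<partial>M)"
      by (rule nn_integral_distr[OF Ym]) (simp add: pm1)
    also have "\<dots> = (\<integral>\<^sup>+ w'. \<phi> (iter_seq T z0 k (\<lambda>i. \<xi> i w), \<xi> (Suc k) w') \<partial>M)"
      by (simp add: \<psi>_def e)
    also have "\<dots> = (\<integral>\<^sup>+ s. \<phi> (iter_seq T z0 k (\<lambda>i. \<xi> i w), s) \<partial>distr M P (\<xi> (Suc k)))"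
      by (rule nn_integral_distr[OF Xm, symmetric]) (simp add: pm2)
    also have "\<dots> = (\<integral>\<^sup>+ s. \<phi> (iter_seq T z0 k (\<lambda>i. \<xi> i w), s) \<partial>P)" using dX by simp
    finally show "(\<integral>\<^sup>+ t. \<psi> (restrict (\<lambda>i. \<xi> i w) {..k}, t) \<partial>distr M (PiM {Suc k} (\<lambda>_. P)) (\<lambda>w. restrict (\<lambda>i. \<xi> i w) {Suc k}))
        = (\<integral>\<^sup>+ s. \<phi> (iter_seq T z0 k (\<lambda>i. \<xi> i w), s) \<partial>P)" .
  qed
  finally show ?thesis .
qed

lemma plc_borel:
  fixes h :: "'a::euclidean_space \<Rightarrow> ereal"
  assumes plc: "proper_lsc_convex h"
  shows "h \<in> borel_measurable borel"
proof (rule borel_measurableI_le)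
  fix y :: ereal
  show "{x \<in> space borel. h x \<le> y} \<in> sets borel"
  proof (cases y)
    case (real r)
    have "closed {x. h x \<le> ereal r}" using plc by (simp add: proper_lsc_convex_def lsc_fun_def)
    then show ?thesis using real by (simp add: borel_closed)
  next
    case PInf then show ?thesis by simp
  next
    case MInf
    have "{x \<in> space borel. h x \<le> y} = {}" using MInf proper_not_minf[OF plc] by auto
    then show ?thesis by simp
  qed
qed

lemma cont_comp_meas:
  assumes "continuous_on S g" "X \<in> measurable M borel" "\<And>w. w \<in> space M \<Longrightarrow> X w \<in> S"
  shows "(\<lambda>w. g (X w)) \<in> borel_measurable M"
proof -
  have "X \<in> measurable M (restrict_space borel S)"
    using assms(2,3) by (intro measurable_restrict_space2) auto
  from measurable_compose[OF this borel_measurable_continuous_on_restrict[OF assms(1)]]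
  show ?thesis by (simp add: comp_def)
qed

lemma ennreal_div_bound:
  fixes S :: ennreal
  assumes "c > 0" "ennreal c * S \<le> ennreal B"
  shows "S \<le> ennreal (B / c)"
proof -
  have "S = ennreal (1 / c) * (ennreal c * S)"
    using assms(1) by (simp add: ennreal_mult[symmetric] mult.assoc[symmetric])
  also have "\<dots> \<le> ennreal (1 / c) * ennreal B" by (rule mult_left_mono[OF assms(2)]) simp
  also have "\<dots> = ennreal (B / c)"
  proof (cases "B \<ge> 0")
    case True then show ?thesis using assms(1) by (simp add: ennreal_mult[symmetric])
  next
    case False
    then have "B / c \<le> 0" using assms(1) by (simp add: divide_nonpos_pos)
    then show ?thesis using False by (simp add: ennreal_neg)
  qed
  finally show ?thesis .
qed


lemma case_a:
  assumes "N > (0::nat)" "\<gamma> = 1 / sqrt N"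
  shows "(D^2 + real N * \<gamma>^2 * Ms^2) / (2 * \<gamma> * real N) = (D^2 + Ms^2) / (2 * sqrt N)"
proof -
  define s where "s = sqrt (real N)"
  have s0: "s > 0" using assms by (simp add: s_def)
  have sN: "real N = s^2" using assms by (simp add: s_def)
  show ?thesis unfolding assms(2) s_def[symmetric] sN using s0 by (simp add: field_simps power2_eq_square)
qed

lemma case_b:
  assumes "N > (0::nat)" "Ms > 0" "D > 0" "\<gamma> = D / (Ms * sqrt N)"
  shows "(D^2 + real N * \<gamma>^2 * Ms^2) / (2 * \<gamma> * real N) = D * Ms / sqrt N"
proof -
  define s where "s = sqrt (real N)"
  have s0: "s > 0" using assms by (simp add: s_def)
  have sN: "real N = s^2" using assms by (simp add: s_def)
  show ?thesis unfolding assms(4) s_def[symmetric] sN using s0 assms(2,3) by (simp add: field_simps power2_eq_square)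
qed

lemma case_c:
  assumes "N > (0::nat)" "Ms > 0" "D > 0" "\<theta> > 0" "\<gamma> = \<theta> * D / (Ms * sqrt N)"
  shows "(D^2 + real N * \<gamma>^2 * Ms^2) / (2 * \<gamma> * real N) \<le> max \<theta> (1 / \<theta>) * D * Ms / sqrt N"
proof -
  define s where "s = sqrt (real N)"
  have s0: "s > 0" using assms by (simp add: s_def)
  have sN: "real N = s^2" using assms by (simp add: s_def)
  have eq: "(D^2 + real N * \<gamma>^2 * Ms^2) / (2 * \<gamma> * real N) = ((1 + \<theta>^2) / (2 * \<theta>)) * (D * Ms / s)"
    unfolding assms(5) s_def[symmetric] sN using s0 assms(2,3,4) by (simp add: field_simps power2_eq_square)
  have th: "(1 + \<theta>^2) / (2 * \<theta>) \<le> max \<theta> (1 / \<theta>)"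
  proof (cases "\<theta> \<ge> 1")
    case True
    then have "1 + \<theta>^2 \<le> 2 * \<theta> * \<theta>" using mult_mono[OF True True] by (simp add: power2_eq_square)
    then have "(1 + \<theta>^2) / (2 * \<theta>) \<le> \<theta>" using assms(4) by (simp add: divide_le_eq mult.commute)
    then show ?thesis by simp
  next
    case False
    then have "1 + \<theta>^2 \<le> 2" using assms(4) False mult_mono[of \<theta> 1 \<theta> 1] by (simp add: power2_eq_square)
    then have "(1 + \<theta>^2) / (2 * \<theta>) \<le> 1 / \<theta>" using assms(4) by (simp add: field_simps)
    then show ?thesis by simp
  qed
  have pos: "D * Ms / s \<ge> 0" using s0 assms by simp
  have "((1 + \<theta>^2) / (2 * \<theta>)) * (D * Ms / s) \<le> max \<theta> (1 / \<theta>) * (D * Ms / s)"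
    by (rule mult_right_mono[OF th pos])
  then show ?thesis unfolding eq s_def by (simp add: mult.assoc)
qed
lemma key_ineq:
  fixes z zs p G v :: "'e::real_inner"
  assumes g: "\<gamma> > 0"
    and vi: "\<gamma> * hp + inner (z - \<gamma> *\<^sub>R G - p) (zs - p) \<le> \<gamma> * hzs"
    and sg: "hz + inner v (p - z) \<le> hp"
  shows "(norm (p - zs))^2 \<le> (norm (z - zs))^2 - 2 * \<gamma> * (hz - hzs + inner G (z - zs)) + \<gamma>^2 * (norm (v + G))^2"
proof -
  have e1: "(norm (p - zs))^2 = (norm (z - zs))^2 - (norm (z - p))^2 - 2 * inner (z - p) (p - zs)"
    by (simp add: power2_norm_eq_inner inner_diff_left inner_diff_right inner_commute algebra_simps)
  have e2: "0 \<le> (norm (\<gamma> *\<^sub>R (v + G) - (z - p)))^2" by simp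
  have e3: "(norm (\<gamma> *\<^sub>R (v + G) - (z - p)))^2 = \<gamma>^2 * (norm (v + G))^2 - 2 * \<gamma> * inner (v + G) (z - p) + (norm (z - p))^2"
  proof -
    have gen: "\<And>a b::'e. (norm (a - b))^2 = (norm a)^2 - 2 * inner a b + (norm b)^2"
      by (simp add: power2_norm_eq_inner inner_diff_left inner_diff_right inner_commute)
    show ?thesis unfolding gen by (simp add: power_mult_distrib)
  qed
  have vi': "\<gamma> * hp + inner (z - p) (zs - p) - \<gamma> * inner G (zs - p) \<le> \<gamma> * hzs"
    using vi by (simp add: inner_diff_left)
  have sg': "\<gamma> * hz + \<gamma> * inner v (p - z) \<le> \<gamma> * hp"
    using sg g by (metis distrib_left mult_left_mono less_imp_le)
  have i1: "inner (z - p) (p - zs) = - inner (z - p) (zs - p)" by (simp add: inner_diff_right)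
  have i2: "inner G (zs - p) = inner G (zs - z) + inner G (z - p)" by (simp add: inner_diff_right)
  have i3: "inner v (p - z) = - inner v (z - p)" by (simp add: inner_diff_right)
  have i4: "inner (v + G) (z - p) = inner v (z - p) + inner G (z - p)" by (simp add: inner_add_left)
  have i5: "inner G (zs - z) = - inner G (z - zs)" by (simp add: inner_diff_right)
  have j1: "\<gamma> * inner G (zs - p) = - (\<gamma> * inner G (z - zs)) + \<gamma> * inner G (z - p)"
    using i2 i5 by (simp add: algebra_simps)
  have j2: "\<gamma> * inner v (p - z) = - (\<gamma> * inner v (z - p))" using i3 by simp
  have j3: "\<gamma> * inner (v + G) (z - p) = \<gamma> * inner v (z - p) + \<gamma> * inner G (z - p)"
    using i4 by (simp add: algebra_simps)
  have j4: "2 * \<gamma> * (hz - hzs + inner G (z - zs)) = 2 * (\<gamma> * hz) - 2 * (\<gamma> * hzs) + 2 * (\<gamma> * inner G (z - zs))"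
    by (simp add: algebra_simps)
  have j5: "2 * \<gamma> * inner (v + G) (z - p) = 2 * (\<gamma> * inner (v + G) (z - p))" by simp
  show ?thesis unfolding j4 using e1 e2 e3 vi' sg' i1 j1 j2 j3 j5 by linarith
qed

theorem theorem2p1:
  fixes vth :: "'a::euclidean_space \<Rightarrow> ereal"
    and \<omega> :: "'b::euclidean_space \<Rightarrow> ereal"
    and M :: "'w measure"            \<comment> \<open>underlying probability space\<close>
    and P :: "'c measure"            \<comment> \<open>distribution of xi, support Xi = space P\<close>
    and \<xi> :: "nat \<Rightarrow> 'w \<Rightarrow> 'c"       \<comment> \<open>samples xi_1, xi_2, ...\<close>
    and F :: "'a \<Rightarrow> 'b \<Rightarrow> 'c \<Rightarrow> real"
    and f :: "'a \<Rightarrow> 'b \<Rightarrow> real"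
    and Gx :: "'a \<Rightarrow> 'b \<Rightarrow> 'c \<Rightarrow> 'a"
    and Gy :: "'a \<Rightarrow> 'b \<Rightarrow> 'c \<Rightarrow> 'b"
    and xs :: 'a and ys :: 'b
    and Ms :: real
    and x :: "nat \<Rightarrow> 'w \<Rightarrow> 'a" and y :: "nat \<Rightarrow> 'w \<Rightarrow> 'b"
    and x1 :: 'a and y1 :: 'b
    and N :: nat and \<gamma> :: real
  defines "Z \<equiv> edom vth \<times> edom \<omega>"
  assumes vth_plc: "proper_lsc_convex vth" and om_plc: "proper_lsc_convex \<omega>"
    \<comment> \<open>f = E[F], finite, continuous, convex-concave on Z\<close>
    and f_def: "\<forall>u\<in>edom vth. \<forall>v\<in>edom \<omega>. integrable P (F u v) \<and> f u v = (\<integral>s. F u v s \<partial>P)"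
    and f_cont: "continuous_on Z (\<lambda>(u, v). f u v)"
    and f_convex: "\<forall>v\<in>edom \<omega>. convex_on (edom vth) (\<lambda>u. f u v)"
    and f_concave: "\<forall>u\<in>edom vth. concave_on (edom \<omega>) (\<lambda>v. f u v)"
    \<comment> \<open>(A1) i.i.d. samples with distribution P\<close>
    and M_prob: "prob_space M" and P_prob: "prob_space P"
    and xi_meas: "\<forall>k. \<xi> k \<in> measurable M P"
    and xi_distr: "\<forall>k. distr M P (\<xi> k) = P"
    and xi_indep: "prob_space.indep_vars M (\<lambda>_. P) \<xi> UNIV"
    \<comment> \<open>(A2) stochastic oracle: measurable, integrable, unbiased (partial) subgradients\<close>
    and Gx_meas: "(\<lambda>(u, v, s). Gx u v s) \<in> borel_measurable (borel \<Otimes>\<^sub>M borel \<Otimes>\<^sub>M P)"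
    and Gy_meas: "(\<lambda>(u, v, s). Gy u v s) \<in> borel_measurable (borel \<Otimes>\<^sub>M borel \<Otimes>\<^sub>M P)"
    and Gx_int: "\<forall>u\<in>edom vth. \<forall>v\<in>edom \<omega>. integrable P (Gx u v)"
    and Gy_int: "\<forall>u\<in>edom vth. \<forall>v\<in>edom \<omega>. integrable P (Gy u v)"
    and gx_sub: "\<forall>u\<in>edom vth. \<forall>v\<in>edom \<omega>. \<forall>u'\<in>edom vth.
                   f u' v \<ge> f u v + (\<integral>s. Gx u v s \<partial>P) \<bullet> (u' - u)"
    and gy_sub: "\<forall>u\<in>edom vth. \<forall>v\<in>edom \<omega>. \<forall>v'\<in>edom \<omega>.
                   - f u v' \<ge> - f u v + (- (\<integral>s. Gy u v s \<partial>P)) \<bullet> (v' - v)"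
    \<comment> \<open>(A3) saddle point\<close>
    and zs_Z: "(xs, ys) \<in> Z"
    and saddle: "\<forall>(u, v)\<in>Z. phi vth f \<omega> xs v \<le> phi vth f \<omega> xs ys \<and> phi vth f \<omega> xs ys \<le> phi vth f \<omega> u ys"
    \<comment> \<open>(A4) bounded second moment\<close>
    and Ms_pos: "Ms > 0"
    and A4: "\<forall>(u, v)\<in>Z. \<exists>vx\<in>esubdiff vth u. \<exists>vy\<in>esubdiff \<omega> v.
               integrable P (\<lambda>s. (norm (vx + Gx u v s, vy - Gy u v s))^2) \<and>
               (\<integral>s. (norm (vx + Gx u v s, vy - Gy u v s))^2 \<partial>P) \<le> Ms^2"
    \<comment> \<open>SAPS iterates with constant step size gamma\<close>
    and N_pos: "N > 0" and \<gamma>_pos: "\<gamma> > 0"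
    and z1_Z: "(x1, y1) \<in> Z"
    and init: "\<forall>w\<in>space M. x 1 w = x1 \<and> y 1 w = y1"
    and step_x: "\<forall>k\<in>{1..N}. \<forall>w\<in>space M.
                   x (Suc k) w = Prox \<gamma> vth (x k w - \<gamma> *\<^sub>R Gx (x k w) (y k w) (\<xi> k w))"
    and step_y: "\<forall>k\<in>{1..N}. \<forall>w\<in>space M.
                   y (Suc k) w = Prox \<gamma> \<omega> (y k w + \<gamma> *\<^sub>R Gy (x k w) (y k w) (\<xi> k w))"
  shows
    "(\<gamma> = 1 / sqrt N \<longrightarrow>
        (\<integral>\<^sup>+ w. ennreal (eps_phi vth f \<omega> (xs, ys) (avg_iter (\<lambda>_. \<gamma>) N (\<lambda>j. (x j w, y j w)))) \<partial>M)
          \<le> ennreal (((norm ((x1, y1) - (xs, ys)))^2 + Ms^2) / (2 * sqrt N))) \<and>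
     (\<gamma> = norm ((x1, y1) - (xs, ys)) / (Ms * sqrt N) \<longrightarrow>
        (\<integral>\<^sup>+ w. ennreal (eps_phi vth f \<omega> (xs, ys) (avg_iter (\<lambda>_. \<gamma>) N (\<lambda>j. (x j w, y j w)))) \<partial>M)
          \<le> ennreal (norm ((x1, y1) - (xs, ys)) * Ms / sqrt N)) \<and>
     (\<forall>\<theta>>0. \<gamma> = \<theta> * norm ((x1, y1) - (xs, ys)) / (Ms * sqrt N) \<longrightarrow>
        (\<integral>\<^sup>+ w. ennreal (eps_phi vth f \<omega> (xs, ys) (avg_iter (\<lambda>_. \<gamma>) N (\<lambda>j. (x j w, y j w)))) \<partial>M)
          \<le> ennreal (max \<theta> (1 / \<theta>) * norm ((x1, y1) - (xs, ys)) * Ms / sqrt N))"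
  proof -
  interpret M: prob_space M by (rule M_prob)
  interpret P: prob_space P by (rule P_prob)
  define zs where "zs = (xs, ys)"
  have xsd: "xs \<in> edom vth" and ysd: "ys \<in> edom \<omega>" using zs_Z by (auto simp: Z_def)
  obtain vx0 vy0 where vx0: "vx0 \<in> esubdiff vth xs" and vy0: "vy0 \<in> esubdiff \<omega> ys"
    using A4 zs_Z by fastforce
  define T where "T z s = (Prox \<gamma> vth (fst z - \<gamma> *\<^sub>R Gx (fst z) (snd z) s), Prox \<gamma> \<omega> (snd z + \<gamma> *\<^sub>R Gy (fst z) (snd z) s))" for z s
  define hZ where "hZ z = real_of_ereal (vth (fst z)) + real_of_ereal (\<omega> (snd z))" for z :: "'a \<times> 'b"
  define eps where "eps z = eps_phi vth f \<omega> (xs, ys) z" for z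
  define D where "D = norm ((x1, y1) - (xs, ys))"
  have finv: "\<exists>a. vth u = ereal a" if "u \<in> edom vth" for u
    using that proper_not_minf[OF vth_plc, of u] by (cases "vth u") (auto simp: edom_def)
  have finw: "\<exists>a. \<omega> u = ereal a" if "u \<in> edom \<omega>" for u
    using that proper_not_minf[OF om_plc, of u] by (cases "\<omega> u") (auto simp: edom_def)
  have T_Z: "T z s \<in> Z" for z s
    using prox_props(1)[OF vth_plc \<gamma>_pos vx0] prox_props(1)[OF om_plc \<gamma>_pos vy0] by (simp add: T_def Z_def)
  have fstb: "(fst :: 'a \<times> 'b \<Rightarrow> 'a) \<in> borel_measurable borel"
    by (intro borel_measurable_continuous_onI continuous_intros)
  have sndb: "(snd :: 'a \<times> 'b \<Rightarrow> 'b) \<in> borel_measurable borel"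
    by (intro borel_measurable_continuous_onI continuous_intros)
  have T_meas: "(\<lambda>(z, s). T z s) \<in> measurable (borel \<Otimes>\<^sub>M P) (borel :: ('a \<times> 'b) measure)"
  proof -
    let ?B = "borel \<Otimes>\<^sub>M P :: (('a \<times> 'b) \<times> 'c) measure"
    have m1: "(\<lambda>p. fst (fst p)) \<in> borel_measurable ?B" by (rule measurable_compose[OF measurable_fst fstb])
    have m2: "(\<lambda>p. snd (fst p)) \<in> borel_measurable ?B" by (rule measurable_compose[OF measurable_fst sndb])
    have m3: "(\<lambda>p. (fst (fst p), snd (fst p), snd p)) \<in> measurable ?B (borel \<Otimes>\<^sub>M borel \<Otimes>\<^sub>M P)"
      by (intro measurable_Pair m1 m2 measurable_snd)
    have gx: "(\<lambda>p. Gx (fst (fst p)) (snd (fst p)) (snd p)) \<in> borel_measurable ?B"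
      using measurable_compose[OF m3 Gx_meas] by simp
    have gy: "(\<lambda>p. Gy (fst (fst p)) (snd (fst p)) (snd p)) \<in> borel_measurable ?B"
      using measurable_compose[OF m3 Gy_meas] by simp
    have a: "(\<lambda>p. Prox \<gamma> vth (fst (fst p) - \<gamma> *\<^sub>R Gx (fst (fst p)) (snd (fst p)) (snd p))) \<in> borel_measurable ?B"
      by (rule measurable_compose[OF _ prox_measurable[OF vth_plc \<gamma>_pos vx0]])
         (intro borel_measurable_diff borel_measurable_scaleR m1 gx measurable_const; simp)
    have b: "(\<lambda>p. Prox \<gamma> \<omega> (snd (fst p) + \<gamma> *\<^sub>R Gy (fst (fst p)) (snd (fst p)) (snd p))) \<in> borel_measurable ?B"
      by (rule measurable_compose[OF _ prox_measurable[OF om_plc \<gamma>_pos vy0]])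
         (intro borel_measurable_add borel_measurable_scaleR m2 gy measurable_const; simp)
    have "(\<lambda>p. (Prox \<gamma> vth (fst (fst p) - \<gamma> *\<^sub>R Gx (fst (fst p)) (snd (fst p)) (snd p)),
               Prox \<gamma> \<omega> (snd (fst p) + \<gamma> *\<^sub>R Gy (fst (fst p)) (snd (fst p)) (snd p)))) \<in> measurable ?B (borel \<Otimes>\<^sub>M borel)"
      by (rule measurable_Pair[OF a b])
    then show ?thesis by (simp add: borel_prod T_def case_prod_beta')
  qed
  have eps_nonneg: "0 \<le> eps z" if "z \<in> Z" for z
  proof -
    obtain u v where z: "z = (u, v)" by (cases z)
    have "phi vth f \<omega> xs v \<le> phi vth f \<omega> xs ys" "phi vth f \<omega> xs ys \<le> phi vth f \<omega> u ys"
      using saddle that z by auto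
    then show ?thesis by (simp add: eps_def eps_phi_def z)
  qed
  have eps_le: "eps (u, v) \<le> hZ (u, v) - hZ zs + inner (\<integral>s. Gx u v s \<partial>P) (u - xs) - inner (\<integral>s. Gy u v s \<partial>P) (v - ys)"
    if ud: "u \<in> edom vth" and vd: "v \<in> edom \<omega>" for u v
  proof -
    have a: "f xs v \<ge> f u v + inner (\<integral>s. Gx u v s \<partial>P) (xs - u)" using gx_sub ud vd xsd by blast
    have b: "- f u ys \<ge> - f u v + inner (- (\<integral>s. Gy u v s \<partial>P)) (ys - v)" using gy_sub ud vd ysd by blast
    have c: "inner (\<integral>s. Gx u v s \<partial>P) (xs - u) = - inner (\<integral>s. Gx u v s \<partial>P) (u - xs)" by (simp add: inner_diff_right)
    have d: "inner (- (\<integral>s. Gy u v s \<partial>P)) (ys - v) = inner (\<integral>s. Gy u v s \<partial>P) (v - ys)" by (simp add: inner_diff_right)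
    show ?thesis unfolding eps_def eps_phi_def phi_def hZ_def zs_def fst_conv snd_conv using a b c d by linarith
  qed
  have PZ: "(\<integral>\<^sup>+ s. ennreal ((norm (T z s - zs))^2) \<partial>P) + ennreal (2 * \<gamma> * eps z) \<le> ennreal ((norm (z - zs))^2 + \<gamma>^2 * Ms^2)"
    if zZ: "z \<in> Z" for z
  proof -
    obtain u v where z: "z = (u, v)" by (cases z)
    have ud: "u \<in> edom vth" and vd: "v \<in> edom \<omega>" using zZ z by (auto simp: Z_def)
    obtain vx vy where vx: "vx \<in> esubdiff vth u" and vy: "vy \<in> esubdiff \<omega> v"
      and int2: "integrable P (\<lambda>s. (norm (vx + Gx u v s, vy - Gy u v s))^2)"
      and bnd2: "(\<integral>s. (norm (vx + Gx u v s, vy - Gy u v s))^2 \<partial>P) \<le> Ms^2"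
      using A4 zZ z by fastforce
    define K where "K = (norm (z - zs))^2 - 2 * \<gamma> * (hZ z - hZ zs)"
    define R where "R s = K - 2 * \<gamma> * inner (Gx u v s) (u - xs) + 2 * \<gamma> * inner (Gy u v s) (v - ys)
        + \<gamma>^2 * (norm (vx + Gx u v s, vy - Gy u v s))^2" for s
    have pw: "(norm (T z s - zs))^2 \<le> R s" for s
    proof -
      define p where "p = T z s"
      have pd: "fst p \<in> edom vth" "snd p \<in> edom \<omega>" using T_Z[of z s] by (auto simp: p_def Z_def)
      have vix: "\<gamma> * real_of_ereal (vth (fst p)) + inner ((u - \<gamma> *\<^sub>R Gx u v s) - fst p) (xs - fst p) \<le> \<gamma> * real_of_ereal (vth xs)"
        unfolding p_def T_def z fst_conv snd_conv by (rule prox_props(2)[OF vth_plc \<gamma>_pos vx0 xsd])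
      have viy: "\<gamma> * real_of_ereal (\<omega> (snd p)) + inner ((v + \<gamma> *\<^sub>R Gy u v s) - snd p) (ys - snd p) \<le> \<gamma> * real_of_ereal (\<omega> ys)"
        unfolding p_def T_def z fst_conv snd_conv by (rule prox_props(2)[OF om_plc \<gamma>_pos vy0 ysd])
      have sgx: "real_of_ereal (vth u) + inner vx (fst p - u) \<le> real_of_ereal (vth (fst p))"
      proof -
        obtain a where a: "vth u = ereal a" using finv[OF ud] by blast
        obtain b where b: "vth (fst p) = ereal b" using finv[OF pd(1)] by blast
        have "vth u + ereal (inner vx (fst p - u)) \<le> vth (fst p)" using vx by (simp add: esubdiff_def)
        then show ?thesis using a b by simp
      qed
      have sgy: "real_of_ereal (\<omega> v) + inner vy (snd p - v) \<le> real_of_ereal (\<omega> (snd p))"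
      proof -
        obtain a where a: "\<omega> v = ereal a" using finw[OF vd] by blast
        obtain b where b: "\<omega> (snd p) = ereal b" using finw[OF pd(2)] by blast
        have "\<omega> v + ereal (inner vy (snd p - v)) \<le> \<omega> (snd p)" using vy by (simp add: esubdiff_def)
        then show ?thesis using a b by simp
      qed
      define G where "G = (Gx u v s, - Gy u v s)"
      have e1: "z - \<gamma> *\<^sub>R G - p = ((u - \<gamma> *\<^sub>R Gx u v s) - fst p, (v + \<gamma> *\<^sub>R Gy u v s) - snd p)"
        by (simp add: z G_def prod_eq_iff)
      have e2: "zs - p = (xs - fst p, ys - snd p)" by (simp add: zs_def prod_eq_iff)
      have e3: "p - z = (fst p - u, snd p - v)" by (simp add: z prod_eq_iff)
      have vi: "\<gamma> * hZ p + inner (z - \<gamma> *\<^sub>R G - p) (zs - p) \<le> \<gamma> * hZ zs"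
        unfolding e1 e2 inner_Pair using vix viy by (simp add: hZ_def zs_def distrib_left)
      have sg: "hZ z + inner (vx, vy) (p - z) \<le> hZ p"
        unfolding e3 inner_Pair using sgx sgy by (simp add: hZ_def z)
      note k = key_ineq[OF \<gamma>_pos vi sg]
      have e4: "(vx, vy) + G = (vx + Gx u v s, vy - Gy u v s)" by (simp add: G_def)
      have e5: "inner G (z - zs) = inner (Gx u v s) (u - xs) - inner (Gy u v s) (v - ys)"
        by (simp add: G_def z zs_def)
      show ?thesis using k unfolding e4 e5 p_def R_def K_def by (simp add: algebra_simps)
    qed
    have gxi: "integrable P (Gx u v)" using Gx_int ud vd by blast
    have gyi: "integrable P (Gy u v)" using Gy_int ud vd by blast
    have i1: "integrable P (\<lambda>s. 2 * \<gamma> * inner (Gx u v s) (u - xs))"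
      by (intro integrable_mult_right integrable_inner_left gxi)
    have i2: "integrable P (\<lambda>s. 2 * \<gamma> * inner (Gy u v s) (v - ys))"
      by (intro integrable_mult_right integrable_inner_left gyi)
    have i3: "integrable P (\<lambda>s. \<gamma>^2 * (norm (vx + Gx u v s, vy - Gy u v s))^2)"
      by (intro integrable_mult_right int2)
    have Rint: "integrable P R" unfolding R_def
      by (intro Bochner_Integration.integrable_add Bochner_Integration.integrable_diff i1 i2 i3 P.integrable_const)
    have Rint_eq: "(\<integral>s. R s \<partial>P) = K - 2 * \<gamma> * inner (\<integral>s. Gx u v s \<partial>P) (u - xs) + 2 * \<gamma> * inner (\<integral>s. Gy u v s \<partial>P) (v - ys)
        + \<gamma>^2 * (\<integral>s. (norm (vx + Gx u v s, vy - Gy u v s))^2 \<partial>P)"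
      unfolding R_def using i1 i2 i3 gxi gyi int2
      by (simp add: Bochner_Integration.integral_add Bochner_Integration.integral_diff P.integrable_const P.prob_space)
    have Rnn: "0 \<le> R s" for s using pw[of s] by (meson order_trans zero_le_power2)
    have A: "(\<integral>\<^sup>+ s. ennreal ((norm (T z s - zs))^2) \<partial>P) \<le> ennreal (\<integral>s. R s \<partial>P)"
    proof -
      have "(\<integral>\<^sup>+ s. ennreal ((norm (T z s - zs))^2) \<partial>P) \<le> (\<integral>\<^sup>+ s. ennreal (R s) \<partial>P)"
        by (intro nn_integral_mono ennreal_leI pw)
      also have "\<dots> = ennreal (\<integral>s. R s \<partial>P)" by (rule nn_integral_eq_integral[OF Rint]) (simp add: Rnn)
      finally show ?thesis .
    qed
    have Ri0: "0 \<le> (\<integral>s. R s \<partial>P)" by (rule Bochner_Integration.integral_nonneg) (simp add: Rnn)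
    have e0: "0 \<le> eps z" by (rule eps_nonneg[OF zZ])
    have el: "eps z \<le> hZ z - hZ zs + inner (\<integral>s. Gx u v s \<partial>P) (u - xs) - inner (\<integral>s. Gy u v s \<partial>P) (v - ys)"
      using eps_le[OF ud vd] by (simp add: z)
    have "\<gamma>^2 * (\<integral>s. (norm (vx + Gx u v s, vy - Gy u v s))^2 \<partial>P) \<le> \<gamma>^2 * Ms^2"
      by (rule mult_left_mono[OF bnd2]) simp
    moreover have "2 * \<gamma> * eps z \<le> 2 * \<gamma> * (hZ z - hZ zs + inner (\<integral>s. Gx u v s \<partial>P) (u - xs) - inner (\<integral>s. Gy u v s \<partial>P) (v - ys))"
      using el \<gamma>_pos by simp
    ultimately have B: "(\<integral>s. R s \<partial>P) + 2 * \<gamma> * eps z \<le> (norm (z - zs))^2 + \<gamma>^2 * Ms^2"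
      unfolding Rint_eq K_def by (simp add: algebra_simps)
    have "(\<integral>\<^sup>+ s. ennreal ((norm (T z s - zs))^2) \<partial>P) + ennreal (2 * \<gamma> * eps z) \<le> ennreal (\<integral>s. R s \<partial>P) + ennreal (2 * \<gamma> * eps z)"
      by (rule add_right_mono[OF A])
    also have "\<dots> = ennreal ((\<integral>s. R s \<partial>P) + 2 * \<gamma> * eps z)"
      using Ri0 e0 \<gamma>_pos by (simp add: ennreal_plus)
    also have "\<dots> \<le> ennreal ((norm (z - zs))^2 + \<gamma>^2 * Ms^2)" by (rule ennreal_leI[OF B])
    finally show ?thesis .
  qed
  have vth_b: "vth \<in> borel_measurable borel" by (rule plc_borel[OF vth_plc])
  have om_b: "\<omega> \<in> borel_measurable borel" by (rule plc_borel[OF om_plc])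
  have eps_meas: "(\<lambda>w. eps (X w)) \<in> borel_measurable M"
    if X: "X \<in> measurable M borel" and XZ: "\<And>w. w \<in> space M \<Longrightarrow> X w \<in> Z" for X
  proof -
    have fX: "(\<lambda>w. fst (X w)) \<in> borel_measurable M" by (rule measurable_compose[OF X fstb])
    have sX: "(\<lambda>w. snd (X w)) \<in> borel_measurable M" by (rule measurable_compose[OF X sndb])
    have a: "(\<lambda>w. real_of_ereal (vth (fst (X w)))) \<in> borel_measurable M"
      by (intro borel_measurable_real_of_ereal measurable_compose[OF fX vth_b])
    have d: "(\<lambda>w. real_of_ereal (\<omega> (snd (X w)))) \<in> borel_measurable M"
      by (intro borel_measurable_real_of_ereal measurable_compose[OF sX om_b])
    have p1: "(\<lambda>w. (fst (X w), ys)) \<in> measurable M borel"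
    proof -
      have "(\<lambda>w. (fst (X w), ys)) \<in> measurable M (borel \<Otimes>\<^sub>M borel)"
        by (intro measurable_Pair fX measurable_const) simp
      then show ?thesis by (simp add: borel_prod)
    qed
    have p2: "(\<lambda>w. (xs, snd (X w))) \<in> measurable M borel"
    proof -
      have "(\<lambda>w. (xs, snd (X w))) \<in> measurable M (borel \<Otimes>\<^sub>M borel)"
        by (intro measurable_Pair sX measurable_const) simp
      then show ?thesis by (simp add: borel_prod)
    qed
    have b: "(\<lambda>w. (\<lambda>(u, v). f u v) (fst (X w), ys)) \<in> borel_measurable M"
      by (rule cont_comp_meas[OF f_cont p1]) (use XZ ysd in \<open>auto simp: Z_def mem_Times_iff\<close>)
    have c: "(\<lambda>w. (\<lambda>(u, v). f u v) (xs, snd (X w))) \<in> borel_measurable M"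
      by (rule cont_comp_meas[OF f_cont p2]) (use XZ xsd in \<open>auto simp: Z_def mem_Times_iff\<close>)
    have e: "(\<lambda>w. eps (X w)) = (\<lambda>w. (real_of_ereal (vth (fst (X w))) + (\<lambda>(u, v). f u v) (fst (X w), ys) - real_of_ereal (\<omega> ys))
        - (real_of_ereal (vth xs) + (\<lambda>(u, v). f u v) (xs, snd (X w)) - real_of_ereal (\<omega> (snd (X w)))))"
      by (simp add: eps_def eps_phi_def phi_def fun_eq_iff)
    show ?thesis unfolding e
      by (intro borel_measurable_diff borel_measurable_add a b c d measurable_const; simp)
  qed
  define zz where "zz k w = iter_seq T (x1, y1) k (\<lambda>i. \<xi> i w)" for k w
  have zzS: "zz (Suc k) w = T (zz k w) (\<xi> (Suc k) w)" for k w by (simp add: zz_def)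
  have zz_Z: "zz k w \<in> Z" for k w by (cases k) (simp_all add: zz_def z1_Z T_Z)
  have zz_meas: "zz k \<in> measurable M borel" for k
  proof -
    have r: "(\<lambda>w. restrict (\<lambda>i. \<xi> i w) {..k}) \<in> measurable M (PiM {..k} (\<lambda>_. P))"
      using xi_meas by (intro measurable_restrict) auto
    have e: "zz k = (\<lambda>w. iter_seq T (x1, y1) k (restrict (\<lambda>i. \<xi> i w) {..k}))"
      unfolding zz_def by (intro ext iter_seq_dep) auto
    show ?thesis unfolding e using measurable_compose[OF r iter_seq_meas[OF T_meas]] by (simp add: comp_def)
  qed
  have zz_eq: "(x (Suc k) w, y (Suc k) w) = zz k w" if w: "w \<in> space M" and kN: "k \<le> N" for k w
    using kN
  proof (induction k)
    case 0 then show ?case using init w by (simp add: zz_def)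
  next
    case (Suc k)
    then have IH: "(x (Suc k) w, y (Suc k) w) = zz k w" by simp
    have IH1: "x (Suc k) w = fst (zz k w)" and IH2: "y (Suc k) w = snd (zz k w)"
      using IH by (metis fst_conv, metis snd_conv)
    have kN': "Suc k \<in> {1..N}" using Suc.prems by simp
    show ?case using step_x[rule_format, OF kN' w] step_y[rule_format, OF kN' w]
      by (simp add: zzS T_def IH1 IH2)
  qed
  define E where "E k = (\<integral>\<^sup>+ w. ennreal ((norm (zz k w - zs))^2) \<partial>M)" for k
  define Ee where "Ee k = (\<integral>\<^sup>+ w. ennreal (eps (zz k w)) \<partial>M)" for k
  have Tm: "(\<lambda>p. T (fst p) (snd p)) \<in> measurable (borel \<Otimes>\<^sub>M P) borel"
    using T_meas by (simp add: case_prod_beta')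
  have nq: "(\<lambda>q. ennreal ((norm (q - zs))^2)) \<in> borel_measurable (borel :: ('a \<times> 'b) measure)"
    by (rule measurable_compose[OF _ measurable_ennreal]) (intro borel_measurable_continuous_onI continuous_intros)
  have phi_meas: "(\<lambda>p. ennreal ((norm (T (fst p) (snd p) - zs))^2)) \<in> borel_measurable (borel \<Otimes>\<^sub>M P)"
    using measurable_compose[OF Tm nq] by simp
  have epsm: "(\<lambda>w. ennreal (eps (zz k w))) \<in> borel_measurable M" for k
    by (rule measurable_compose[OF eps_meas[OF zz_meas zz_Z] measurable_ennreal])
  have step: "E (Suc k) + ennreal (2 * \<gamma>) * Ee k \<le> E k + ennreal (\<gamma>^2 * Ms^2)" for k
  proof -
    have "E (Suc k) = (\<integral>\<^sup>+ w. (\<lambda>p. ennreal ((norm (T (fst p) (snd p) - zs))^2)) (iter_seq T (x1, y1) k (\<lambda>i. \<xi> i w), \<xi> (Suc k) w) \<partial>M)"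
      by (simp add: E_def zz_def)
    also have "\<dots> = (\<integral>\<^sup>+ w. (\<integral>\<^sup>+ s. ennreal ((norm (T (zz k w) s - zs))^2) \<partial>P) \<partial>M)"
      using iter_seq_nn_integral[OF M_prob xi_indep T_meas _ phi_meas, of k "(x1, y1)"] xi_distr
      by (simp add: zz_def)
    finally have Es: "E (Suc k) = (\<integral>\<^sup>+ w. (\<integral>\<^sup>+ s. ennreal ((norm (T (zz k w) s - zs))^2) \<partial>P) \<partial>M)" .
    have m0: "(\<lambda>z. \<integral>\<^sup>+ s. ennreal ((norm (T z s - zs))^2) \<partial>P) \<in> borel_measurable borel"
      using P.borel_measurable_nn_integral[of "\<lambda>z s. ennreal ((norm (T z s - zs))^2)" borel] phi_meas
      by (simp add: case_prod_beta')
    have m1: "(\<lambda>w. \<integral>\<^sup>+ s. ennreal ((norm (T (zz k w) s - zs))^2) \<partial>P) \<in> borel_measurable M"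
      by (rule measurable_compose[OF zz_meas m0])
    have m2: "(\<lambda>w. ennreal (2 * \<gamma> * eps (zz k w))) \<in> borel_measurable M"
      by (rule measurable_compose[OF borel_measurable_times[OF borel_measurable_const eps_meas[OF zz_meas zz_Z]] measurable_ennreal])
    have Ec: "ennreal (2 * \<gamma>) * Ee k = (\<integral>\<^sup>+ w. ennreal (2 * \<gamma> * eps (zz k w)) \<partial>M)"
    proof -
      have "ennreal (2 * \<gamma>) * Ee k = (\<integral>\<^sup>+ w. ennreal (2 * \<gamma>) * ennreal (eps (zz k w)) \<partial>M)"
        unfolding Ee_def by (rule nn_integral_cmult[symmetric, OF epsm])
      also have "\<dots> = (\<integral>\<^sup>+ w. ennreal (2 * \<gamma> * eps (zz k w)) \<partial>M)"
        using \<gamma>_pos eps_nonneg[OF zz_Z] by (intro nn_integral_cong) (simp add: ennreal_mult)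
      finally show ?thesis .
    qed
    have "E (Suc k) + ennreal (2 * \<gamma>) * Ee k
        = (\<integral>\<^sup>+ w. ((\<integral>\<^sup>+ s. ennreal ((norm (T (zz k w) s - zs))^2) \<partial>P) + ennreal (2 * \<gamma> * eps (zz k w))) \<partial>M)"
      unfolding Es Ec by (rule nn_integral_add[symmetric, OF m1 m2])
    also have "\<dots> \<le> (\<integral>\<^sup>+ w. ennreal ((norm (zz k w - zs))^2 + \<gamma>^2 * Ms^2) \<partial>M)"
      by (intro nn_integral_mono PZ zz_Z)
    also have "\<dots> = (\<integral>\<^sup>+ w. ennreal ((norm (zz k w - zs))^2) + ennreal (\<gamma>^2 * Ms^2) \<partial>M)"
      by (intro nn_integral_cong) (simp add: ennreal_plus)
    also have "\<dots> = E k + ennreal (\<gamma>^2 * Ms^2)"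
    proof -
      have "(\<lambda>w. ennreal ((norm (zz k w - zs))^2)) \<in> borel_measurable M"
        by (rule measurable_compose[OF zz_meas nq])
      then show ?thesis unfolding E_def
        by (subst nn_integral_add) (simp_all add: M.emeasure_space_1)
    qed
    finally show ?thesis .
  qed
  have E0: "E 0 = ennreal (D^2)" by (simp add: E_def zz_def D_def zs_def M.emeasure_space_1)
  have sumb: "E n + ennreal (2 * \<gamma>) * (\<Sum>k<n. Ee k) \<le> ennreal (D^2) + ennreal (real n * (\<gamma>^2 * Ms^2))" for n
  proof (induction n)
    case 0 show ?case by (simp add: E0)
  next
    case (Suc n)
    have "E (Suc n) + ennreal (2 * \<gamma>) * (\<Sum>k<Suc n. Ee k)
        = (E (Suc n) + ennreal (2 * \<gamma>) * Ee n) + ennreal (2 * \<gamma>) * (\<Sum>k<n. Ee k)"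
      by (simp add: distrib_left add_ac)
    also have "\<dots> \<le> (E n + ennreal (\<gamma>^2 * Ms^2)) + ennreal (2 * \<gamma>) * (\<Sum>k<n. Ee k)"
      by (intro add_right_mono step)
    also have "\<dots> = (E n + ennreal (2 * \<gamma>) * (\<Sum>k<n. Ee k)) + ennreal (\<gamma>^2 * Ms^2)"
      by (simp add: add_ac)
    also have "\<dots> \<le> (ennreal (D^2) + ennreal (real n * (\<gamma>^2 * Ms^2))) + ennreal (\<gamma>^2 * Ms^2)"
      by (intro add_right_mono Suc.IH)
    also have "\<dots> = ennreal (D^2) + ennreal (real (Suc n) * (\<gamma>^2 * Ms^2))"
    proof -
      have "ennreal (real (Suc n) * (\<gamma>^2 * Ms^2)) = ennreal (real n * (\<gamma>^2 * Ms^2) + \<gamma>^2 * Ms^2)"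
        by (simp add: algebra_simps)
      also have "\<dots> = ennreal (real n * (\<gamma>^2 * Ms^2)) + ennreal (\<gamma>^2 * Ms^2)" by (rule ennreal_plus) auto
      finally show ?thesis by (simp only: add.assoc)
    qed
    finally show ?case .
  qed
  have SB: "(\<Sum>k<N. Ee k) \<le> ennreal ((D^2 + real N * \<gamma>^2 * Ms^2) / (2 * \<gamma>))"
  proof (rule ennreal_div_bound)
    show "0 < 2 * \<gamma>" using \<gamma>_pos by simp
    have "ennreal (2 * \<gamma>) * (\<Sum>k<N. Ee k) \<le> E N + ennreal (2 * \<gamma>) * (\<Sum>k<N. Ee k)"
      by (simp add: add_increasing)
    also have "\<dots> \<le> ennreal (D^2) + ennreal (real N * (\<gamma>^2 * Ms^2))" by (rule sumb)
    also have "\<dots> = ennreal (D^2 + real N * \<gamma>^2 * Ms^2)" by (simp add: ennreal_plus mult.assoc)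
    finally show "ennreal (2 * \<gamma>) * (\<Sum>k<N. Ee k) \<le> ennreal (D^2 + real N * \<gamma>^2 * Ms^2)" .
  qed
  have avg_eq: "avg_iter (\<lambda>_. \<gamma>) N (\<lambda>j. (x j w, y j w)) = (\<Sum>k<N. (1 / real N) *\<^sub>R zz k w)"
    if w: "w \<in> space M" for w
  proof -
    have c: "(\<Sum>i=1..N. \<gamma>) = real N * \<gamma>" by simp
    have "avg_iter (\<lambda>_. \<gamma>) N (\<lambda>j. (x j w, y j w)) = (\<Sum>j=1..N. (1 / real N) *\<^sub>R (x j w, y j w))"
      unfolding avg_iter_def c using \<gamma>_pos by simp
    also have "\<dots> = (\<Sum>k<N. (1 / real N) *\<^sub>R (x (Suc k) w, y (Suc k) w))"
      using sum.atLeast1_atMost_eq[of "\<lambda>j. (1 / real N) *\<^sub>R (x j w, y j w)" N] by simp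
    also have "\<dots> = (\<Sum>k<N. (1 / real N) *\<^sub>R zz k w)"
      using zz_eq[OF w] by (intro sum.cong) auto
    finally show ?thesis .
  qed
  have jensen: "eps (\<Sum>k<N. (1 / real N) *\<^sub>R zz k w) \<le> (\<Sum>k<N. (1 / real N) * eps (zz k w))" for w
  proof -
    define a where "a = (\<lambda>k::nat. 1 / real N)"
    have ne: "{..<N} \<noteq> {}" using N_pos by auto
    have sa: "(\<Sum>k<N. a k) = 1" using N_pos by (simp add: a_def)
    have a0: "\<And>k. 0 \<le> a k" by (simp add: a_def)
    have xin: "\<And>k. fst (zz k w) \<in> edom vth" and yin: "\<And>k. snd (zz k w) \<in> edom \<omega>"
      using zz_Z by (auto simp: Z_def mem_Times_iff)
    have cv: "convex_on (edom vth) (\<lambda>u. real_of_ereal (vth u))"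
      using vth_plc by (simp add: proper_lsc_convex_def convex_efun_def)
    have cw: "convex_on (edom \<omega>) (\<lambda>u. real_of_ereal (\<omega> u))"
      using om_plc by (simp add: proper_lsc_convex_def convex_efun_def)
    have cf: "convex_on (edom vth) (\<lambda>u. f u ys)" using f_convex ysd by blast
    have cg: "convex_on (edom \<omega>) (\<lambda>v. - f xs v)" using f_concave xsd by (simp add: concave_on_def)
    have j1: "real_of_ereal (vth (\<Sum>k<N. a k *\<^sub>R fst (zz k w))) \<le> (\<Sum>k<N. a k * real_of_ereal (vth (fst (zz k w))))"
      by (rule convex_on_sum[OF _ ne cv sa a0 xin]) simp
    have j2: "f (\<Sum>k<N. a k *\<^sub>R fst (zz k w)) ys \<le> (\<Sum>k<N. a k * f (fst (zz k w)) ys)"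
      by (rule convex_on_sum[OF _ ne cf sa a0 xin]) simp
    have j3: "real_of_ereal (\<omega> (\<Sum>k<N. a k *\<^sub>R snd (zz k w))) \<le> (\<Sum>k<N. a k * real_of_ereal (\<omega> (snd (zz k w))))"
      by (rule convex_on_sum[OF _ ne cw sa a0 yin]) simp
    have j4: "- f xs (\<Sum>k<N. a k *\<^sub>R snd (zz k w)) \<le> (\<Sum>k<N. a k * - f xs (snd (zz k w)))"
      by (rule convex_on_sum[OF _ ne cg sa a0 yin]) simp
    have fs: "fst (\<Sum>k<N. a k *\<^sub>R zz k w) = (\<Sum>k<N. a k *\<^sub>R fst (zz k w))" by (simp add: fst_sum)
    have ss: "snd (\<Sum>k<N. a k *\<^sub>R zz k w) = (\<Sum>k<N. a k *\<^sub>R snd (zz k w))" by (simp add: snd_sum)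
    have rhs: "(\<Sum>k<N. a k * eps (zz k w)) = (\<Sum>k<N. a k * real_of_ereal (vth (fst (zz k w))))
       + (\<Sum>k<N. a k * f (fst (zz k w)) ys) - real_of_ereal (\<omega> ys) - real_of_ereal (vth xs)
       + (\<Sum>k<N. a k * - f xs (snd (zz k w))) + (\<Sum>k<N. a k * real_of_ereal (\<omega> (snd (zz k w))))"
    proof -
      have "(\<Sum>k<N. a k * eps (zz k w)) = (\<Sum>k<N. a k * real_of_ereal (vth (fst (zz k w))) + a k * f (fst (zz k w)) ys
          - a k * real_of_ereal (\<omega> ys) - a k * real_of_ereal (vth xs) + a k * - f xs (snd (zz k w)) + a k * real_of_ereal (\<omega> (snd (zz k w))))"
        by (intro sum.cong) (simp_all add: eps_def eps_phi_def phi_def algebra_simps)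
      also have "\<dots> = (\<Sum>k<N. a k * real_of_ereal (vth (fst (zz k w)))) + (\<Sum>k<N. a k * f (fst (zz k w)) ys)
          - (\<Sum>k<N. a k) * real_of_ereal (\<omega> ys) - (\<Sum>k<N. a k) * real_of_ereal (vth xs)
          + (\<Sum>k<N. a k * - f xs (snd (zz k w))) + (\<Sum>k<N. a k * real_of_ereal (\<omega> (snd (zz k w))))"
        by (simp add: sum.distrib sum_subtractf sum_distrib_right sum_negf)
      finally show ?thesis using sa by simp
    qed
    have "eps (\<Sum>k<N. a k *\<^sub>R zz k w) \<le> (\<Sum>k<N. a k * eps (zz k w))"
      unfolding rhs using j1 j2 j3 j4 by (simp add: eps_def eps_phi_def phi_def fs ss)
    then show ?thesis by (simp add: a_def)
  qed
  have MB: "(\<integral>\<^sup>+ w. ennreal (eps_phi vth f \<omega> (xs, ys) (avg_iter (\<lambda>_. \<gamma>) N (\<lambda>j. (x j w, y j w)))) \<partial>M)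
      \<le> ennreal ((D^2 + real N * \<gamma>^2 * Ms^2) / (2 * \<gamma> * real N))"
  proof -
    have "(\<integral>\<^sup>+ w. ennreal (eps_phi vth f \<omega> (xs, ys) (avg_iter (\<lambda>_. \<gamma>) N (\<lambda>j. (x j w, y j w)))) \<partial>M)
        = (\<integral>\<^sup>+ w. ennreal (eps (\<Sum>k<N. (1 / real N) *\<^sub>R zz k w)) \<partial>M)"
      by (intro nn_integral_cong) (simp add: avg_eq eps_def)
    also have "\<dots> \<le> (\<integral>\<^sup>+ w. (\<Sum>k<N. ennreal (1 / real N) * ennreal (eps (zz k w))) \<partial>M)"
    proof (intro nn_integral_mono)
      fix w
      have "ennreal (eps (\<Sum>k<N. (1 / real N) *\<^sub>R zz k w)) \<le> ennreal (\<Sum>k<N. (1 / real N) * eps (zz k w))"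
        by (rule ennreal_leI[OF jensen])
      also have "\<dots> = (\<Sum>k<N. ennreal ((1 / real N) * eps (zz k w)))"
        using eps_nonneg[OF zz_Z] by (subst sum_ennreal) auto
      also have "\<dots> = (\<Sum>k<N. ennreal (1 / real N) * ennreal (eps (zz k w)))"
        by (intro sum.cong refl ennreal_mult) (simp_all add: eps_nonneg[OF zz_Z])
      finally show "ennreal (eps (\<Sum>k<N. (1 / real N) *\<^sub>R zz k w)) \<le> (\<Sum>k<N. ennreal (1 / real N) * ennreal (eps (zz k w)))" .
    qed
    also have "\<dots> = (\<Sum>k<N. (\<integral>\<^sup>+ w. ennreal (1 / real N) * ennreal (eps (zz k w)) \<partial>M))"
      by (rule nn_integral_sum) (intro borel_measurable_times_ennreal borel_measurable_const epsm)
    also have "\<dots> = (\<Sum>k<N. ennreal (1 / real N) * Ee k)"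
      unfolding Ee_def by (intro sum.cong refl nn_integral_cmult epsm)
    also have "\<dots> = ennreal (1 / real N) * (\<Sum>k<N. Ee k)" by (simp add: sum_distrib_left)
    also have "\<dots> \<le> ennreal (1 / real N) * ennreal ((D^2 + real N * \<gamma>^2 * Ms^2) / (2 * \<gamma>))"
      by (rule mult_left_mono[OF SB]) simp
    also have "\<dots> = ennreal ((D^2 + real N * \<gamma>^2 * Ms^2) / (2 * \<gamma> * real N))"
    proof -
      have B0: "0 \<le> (D^2 + real N * \<gamma>^2 * Ms^2) / (2 * \<gamma>)" using \<gamma>_pos by simp
      have "ennreal (1 / real N) * ennreal ((D^2 + real N * \<gamma>^2 * Ms^2) / (2 * \<gamma>))
          = ennreal (1 / real N * ((D^2 + real N * \<gamma>^2 * Ms^2) / (2 * \<gamma>)))"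
        by (rule ennreal_mult[symmetric]) (simp_all add: B0)
      also have "1 / real N * ((D^2 + real N * \<gamma>^2 * Ms^2) / (2 * \<gamma>)) = (D^2 + real N * \<gamma>^2 * Ms^2) / (2 * \<gamma> * real N)"
        by (simp add: field_simps)
      finally show ?thesis .
    qed
    finally show ?thesis .
  qed
  have D0: "D \<ge> 0" by (simp add: D_def)
  show ?thesis
  proof (intro conjI impI allI)
    assume g: "\<gamma> = 1 / sqrt N"
    show "(\<integral>\<^sup>+ w. ennreal (eps_phi vth f \<omega> (xs, ys) (avg_iter (\<lambda>_. \<gamma>) N (\<lambda>j. (x j w, y j w)))) \<partial>M)
          \<le> ennreal (((norm ((x1, y1) - (xs, ys)))^2 + Ms^2) / (2 * sqrt N))"
      using MB case_a[OF N_pos g, of D Ms] by (simp add: D_def)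
  next
    assume g: "\<gamma> = norm ((x1, y1) - (xs, ys)) / (Ms * sqrt N)"
    then have Dp: "D > 0" using \<gamma>_pos Ms_pos D0 unfolding D_def[symmetric]
      by (metis divide_eq_0_iff less_eq_real_def order_less_irrefl)
    show "(\<integral>\<^sup>+ w. ennreal (eps_phi vth f \<omega> (xs, ys) (avg_iter (\<lambda>_. \<gamma>) N (\<lambda>j. (x j w, y j w)))) \<partial>M)
          \<le> ennreal (norm ((x1, y1) - (xs, ys)) * Ms / sqrt N)"
      using MB case_b[OF N_pos Ms_pos Dp, of \<gamma>] g by (simp add: D_def)
  next
    fix \<theta> :: real
    assume th: "\<theta> > 0" and g: "\<gamma> = \<theta> * norm ((x1, y1) - (xs, ys)) / (Ms * sqrt N)"
    then have Dp: "D > 0" using \<gamma>_pos Ms_pos D0 unfolding D_def[symmetric]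
      by (metis divide_eq_0_iff less_eq_real_def order_less_irrefl mult_zero_right)
    have "ennreal ((D^2 + real N * \<gamma>^2 * Ms^2) / (2 * \<gamma> * real N)) \<le> ennreal (max \<theta> (1 / \<theta>) * D * Ms / sqrt N)"
      using case_c[OF N_pos Ms_pos Dp th, of \<gamma>] g by (intro ennreal_leI) (simp add: D_def)
    then show "(\<integral>\<^sup>+ w. ennreal (eps_phi vth f \<omega> (xs, ys) (avg_iter (\<lambda>_. \<gamma>) N (\<lambda>j. (x j w, y j w)))) \<partial>M)
          \<le> ennreal (max \<theta> (1 / \<theta>) * norm ((x1, y1) - (xs, ys)) * Ms / sqrt N)"
      using MB by (simp add: D_def)
  qed
qed

end
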